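(* Under the standing assumptions, let $\{x_i\}_{i=1}^N$ be a solution of the delayed Hegselmann–Krause system, and let $C\in(0,1)$ be as defined below. Put $\tilde C:=1-e^{-K\bar\tau}(1-C)\in(0,1)$. Then $D_{n+1}\le\tilde C\,D_{n-2}$ for all integers $n\ge2$, and consequently $D_{3n}\le\tilde C^{\,n}D_0$ for all $n\in\mathbb{N}_0$.
   Context: Standing assumptions: $N\ge 2$, $d\ge 1$, $\bar\tau>0$; $\tau:[0,\infty)\to[0,\bar\tau]$ continuous; $\psi:\mathbb{R}^d\times\mathbb{R}^d\to\mathbb{R}$ continuous, bounded and strictly positive, $K:=\|\psi\|_\infty$; initial data $x_i^0:[-\bar\tau,0]\to\mathbb{R}^d$ continuous. The delayed Hegselmann–Krause system is $$\frac{d}{dt}x_i(t)=\frac{1}{N-1}\sum_{j\ne i}\psi\big(x_i(t),x_j(t-\tau(t))\big)\big(x_j(t-\tau(t))-x_i(t)\big),\quad t>0,$$ with $x_i=x_i^0$ on $[-\bar\tau,0]$; a solution means continuous $x_i:[-\bar\tau,\infty)\to\mathbb{R}^d$, differentiable on $(0,\infty)$, satisfying this. For $n\in\mathbb{N}_0$, $D_n:=\max_{i,j=1,\dots,N}\max_{s,t\in[n\bar\tau-\bar\tau,\,n\bar\tau]}|x_i(s)-x_j(t)|$. $M^0:=\max_{i}\max_{s\in[-\bar\tau,0]}|x_i(s)|$, $\psi_0:=\min_{|y|,|z|\le M^0}\psi(y,z)$, and $C:=\max\{1-e^{-2K\bar\tau},\ 1-\frac{\psi_0}{K}(1-e^{-K\bar\tau})\}$.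 *)

theory Defs
  imports "HOL-Analysis.Analysis"
begin

definition is_dHK_solution ::
  "nat \<Rightarrow> real \<Rightarrow> (real \<Rightarrow> real) \<Rightarrow> ('a::euclidean_space \<Rightarrow> 'a \<Rightarrow> real)
     \<Rightarrow> (nat \<Rightarrow> real \<Rightarrow> 'a) \<Rightarrow> bool" where
  "is_dHK_solution N taub tau psi x \<longleftrightarrow>
     (\<forall>i\<in>{1..N}. continuous_on {-taub..} (x i)) \<and>
     (\<forall>i\<in>{1..N}. \<forall>t>0.
        (x i has_vector_derivative
           ((1 / (real N - 1)) *\<^sub>R
              (\<Sum>j\<in>{1..N}-{i}. psi (x i t) (x j (t - tau t)) *\<^sub>R (x j (t - tau t) - x i t))))
        (at t))"

definition diamD :: "nat \<Rightarrow> real \<Rightarrow> (nat \<Rightarrow> real \<Rightarrow> 'a::euclidean_space) \<Rightarrow> nat \<Rightarrow> real" where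
  "diamD N taub x n =
     (SUP p \<in> {(i,j,s,t). i \<in> {1..N} \<and> j \<in> {1..N} \<and>
                 s \<in> {real n * taub - taub .. real n * taub} \<and>
                 t \<in> {real n * taub - taub .. real n * taub}}.
        (case p of (i,j,s,t) \<Rightarrow> norm (x i s - x j t)))"

definition Kconst :: "('a \<Rightarrow> 'a \<Rightarrow> real) \<Rightarrow> real" where
  "Kconst psi = (SUP p \<in> UNIV. \<bar>psi (fst p) (snd p)\<bar>)"

definition M0 :: "nat \<Rightarrow> real \<Rightarrow> (nat \<Rightarrow> real \<Rightarrow> 'a::euclidean_space) \<Rightarrow> real" where
  "M0 N taub x = (SUP p \<in> {1..N} \<times> {-taub..0}. norm (x (fst p) (snd p)))"

definition psi0 :: "('a::euclidean_space \<Rightarrow> 'a \<Rightarrow> real) \<Rightarrow> real \<Rightarrow> real" where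
  "psi0 psi M = (INF p \<in> cball 0 M \<times> cball 0 M. psi (fst p) (snd p))"

definition Cconst :: "real \<Rightarrow> real \<Rightarrow> real \<Rightarrow> real" where
  "Cconst K taub p0 = max (1 - exp (-2 * K * taub)) (1 - p0 / K * (1 - exp (- K * taub)))"

end

theory Submission imports Defs begin

lemma gronwall:
  fixes f f' :: "real \<Rightarrow> real"
  assumes K: "K > 0" and ab: "a \<le> b" and fc: "continuous_on {a..b} f"
    and fd: "\<And>r. a < r \<Longrightarrow> r < b \<Longrightarrow> (f has_real_derivative f' r) (at r)"
    and fi: "\<And>r. a < r \<Longrightarrow> r < b \<Longrightarrow> f' r \<ge> c - K * f r"
  shows "f b \<ge> exp (-K*(b-a)) * f a + c/K * (1 - exp (-K*(b-a)))"
proof -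
  define G where "G r = exp (K*r) * f r - c/K * exp (K*r)" for r
  have "G a \<le> G b"
  proof (rule DERIV_nonneg_imp_increasing_open[OF ab])
    fix r assume r: "a<r" "r<b"
    have "(G has_real_derivative (exp(K*r)*K*f r + exp(K*r)*f' r - c/K*(exp(K*r)*K))) (at r)"
      unfolding G_def by (auto intro!: derivative_eq_intros fd r)
    moreover have "exp(K*r)*K*f r + exp(K*r)*f' r - c/K*(exp(K*r)*K) = exp(K*r)*(f' r + K*f r - c)"
      using K by (simp add: field_simps)
    moreover have "exp(K*r)*(f' r + K*f r - c) \<ge> 0" using fi[OF r] by simp
    ultimately show "\<exists>y. (G has_real_derivative y) (at r) \<and> 0 \<le> y" by auto
  next
    show "continuous_on {a..b} G" unfolding G_def by (intro continuous_intros fc)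
  qed
  then have m1: "exp(-K*b) * G a \<le> exp(-K*b) * G b" by (simp add: mult_left_mono)
  have e1: "exp(-K*b)*exp(K*a) = exp(-K*(b-a))" by (simp add: exp_add[symmetric] algebra_simps)
  have e2: "exp(-K*b)*exp(K*b) = 1" by (simp add: exp_add[symmetric])
  have "exp(-K*b) * G a = (exp(-K*b)*exp(K*a)) * f a - c/K * (exp(-K*b)*exp(K*a))"
    unfolding G_def by (simp add: algebra_simps)
  then have m2: "exp(-K*b) * G a = exp(-K*(b-a)) * f a - c/K * exp(-K*(b-a))" unfolding e1 .
  have "exp(-K*b) * G b = (exp(-K*b)*exp(K*b)) * f b - c/K * (exp(-K*b)*exp(K*b))"
    unfolding G_def by (simp add: algebra_simps)
  then have m3: "exp(-K*b) * G b = f b - c/K" unfolding e2 by simp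
  have m4: "c/K * (1 - exp (-K*(b-a))) = c/K - c/K * exp (-K*(b-a))" by (simp add: right_diff_distrib)
  show ?thesis using m1 m2 m3 m4 by linarith
qed

locale dhk =
  fixes N :: nat and taub :: real and tau :: "real \<Rightarrow> real"
    and psi :: "'a::euclidean_space \<Rightarrow> 'a \<Rightarrow> real"
    and x :: "nat \<Rightarrow> real \<Rightarrow> 'a" and K :: real
  assumes N2: "N \<ge> 2"
    and taub_pos: "taub > 0"
    and tau_range: "\<And>t. t \<ge> 0 \<Longrightarrow> tau t \<in> {0..taub}"
    and psi_pos: "\<And>y z. psi y z > 0"
    and psi_le: "\<And>y z. psi y z \<le> K"
    and cont: "\<And>i. i\<in>{1..N} \<Longrightarrow> continuous_on {-taub..} (x i)"
    and der: "\<And>i t. i\<in>{1..N} \<Longrightarrow> t > 0 \<Longrightarrow>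
        (x i has_vector_derivative
           ((1 / (real N - 1)) *\<^sub>R
              (\<Sum>j\<in>{1..N}-{i}. psi (x i t) (x j (t - tau t)) *\<^sub>R (x j (t - tau t) - x i t))))
        (at t)"
begin

lemma K_pos: "K > 0" using psi_pos[of 0 0] psi_le[of 0 0] by linarith

lemma card_S: "i \<in> {1..N} \<Longrightarrow> card ({1..N}-{i}) = N - 1"
  by (simp add: card_Diff_singleton)

lemma yder:
  assumes "i\<in>{1..N}" "t > 0"
  shows "((\<lambda>t. v \<bullet> x i t) has_real_derivative
     (1 / (real N - 1)) * (\<Sum>j\<in>{1..N}-{i}. psi (x i t) (x j (t - tau t)) * (v \<bullet> x j (t - tau t) - v \<bullet> x i t))) (at t)"
proof -
  have h1: "((\<lambda>t. v \<bullet> x i t) has_vector_derivative v \<bullet> ((1 / (real N - 1)) *\<^sub>R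
              (\<Sum>j\<in>{1..N}-{i}. psi (x i t) (x j (t - tau t)) *\<^sub>R (x j (t - tau t) - x i t)))) (at t)"
    by (rule bounded_linear.has_vector_derivative[OF bounded_linear_inner_right der[OF assms]])
  have eq: "v \<bullet> ((1 / (real N - 1)) *\<^sub>R
              (\<Sum>j\<in>{1..N}-{i}. psi (x i t) (x j (t - tau t)) *\<^sub>R (x j (t - tau t) - x i t)))
     = (1 / (real N - 1)) * (\<Sum>j\<in>{1..N}-{i}. psi (x i t) (x j (t - tau t)) * (v \<bullet> x j (t - tau t) - v \<bullet> x i t))"
    by (simp add: inner_sum_right inner_diff_right)
  show ?thesis unfolding has_real_derivative_iff_has_vector_derivative using h1[unfolded eq] .
qed

lemma ycont: "i\<in>{1..N} \<Longrightarrow> S \<subseteq> {-taub..} \<Longrightarrow> continuous_on S (\<lambda>t. v \<bullet> x i t)"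
  by (intro continuous_on_inner continuous_on_const continuous_on_subset[OF cont]) auto

lemma finite_argmax:
  fixes f :: "nat \<Rightarrow> real"
  assumes "N \<ge> 1"
  obtains i where "i \<in> {1..N}" "\<And>j. j \<in> {1..N} \<Longrightarrow> f j \<le> f i"
proof -
  have ne: "f ` {1..N} \<noteq> {}" using assms by auto
  have "Max (f ` {1..N}) \<in> f ` {1..N}" by (rule Max_in) (use ne in auto)
  then obtain i where i: "i \<in> {1..N}" "Max (f ` {1..N}) = f i" by auto
  show ?thesis by (rule that[OF i(1)]) (metis Max_ge finite_atLeastAtMost finite_imageI image_eqI i(2))
qed

lemma upper_inv:
  assumes T0: "T0 \<ge> 0" and init: "\<And>j q. j\<in>{1..N} \<Longrightarrow> q\<in>{T0-taub..T0} \<Longrightarrow> v \<bullet> x j q \<le> Mv"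
    and i: "i\<in>{1..N}" and r: "r \<ge> T0 - taub"
  shows "v \<bullet> x i r \<le> Mv"
proof -
  have bar: "\<forall>j\<in>{1..N}. \<forall>r\<ge>T0. v \<bullet> x j r < Mv + e * (1 + (r - T0))" if e: "e > 0" for e
  proof (rule ccontr)
    assume neg: "\<not> ?thesis"
    define b where "b r = Mv + e*(1 + (r - T0))" for r
    define S where "S = (\<Union>j\<in>{1..N}. {T0..} \<inter> (\<lambda>r. v \<bullet> x j r - b r) -` {0..})"
    have Sne: "S \<noteq> {}" using neg unfolding S_def b_def by force
    have "closed S" unfolding S_def
    proof (intro closed_UN ballI)
      fix j assume j: "j \<in> {1..N}"
      show "closed ({T0..} \<inter> (\<lambda>r. v \<bullet> x j r - b r) -` {0..})"
        unfolding b_def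
        by (intro continuous_closed_preimage continuous_intros ycont[OF j]) (use T0 taub_pos in auto)
    qed simp
    moreover have bdd: "bdd_below S" unfolding S_def by (auto intro!: bdd_belowI[of _ T0])
    ultimately have rsS: "Inf S \<in> S" using Sne closed_contains_Inf by blast
    define rs where "rs = Inf S"
    have rsT: "rs \<ge> T0" using rsS unfolding rs_def S_def by auto
    obtain j0 where j0: "j0 \<in> {1..N}" "v \<bullet> x j0 rs \<ge> b rs" using rsS unfolding rs_def S_def by auto
    have below: "v \<bullet> x j q < b q" if j: "j\<in>{1..N}" and q: "T0 \<le> q" "q < rs" for j q
    proof (rule ccontr)
      assume "\<not> v \<bullet> x j q < b q"
      then have "q \<in> S" unfolding S_def using j q by (auto intro!: bexI[of _ j])
      then have "rs \<le> q" unfolding rs_def using bdd by (rule cInf_lower)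
      then show False using q by simp
    qed
    obtain i where i: "i \<in> {1..N}" and imax: "\<And>j. j \<in> {1..N} \<Longrightarrow> v \<bullet> x j rs \<le> v \<bullet> x i rs"
      using finite_argmax[of "\<lambda>j. v \<bullet> x j rs"] N2 by auto
    have ib: "v \<bullet> x i rs \<ge> b rs" using imax[OF j0(1)] j0(2) by linarith
    have rsgt: "rs > T0"
    proof (rule ccontr)
      assume "\<not> rs > T0"
      then have "rs = T0" using rsT by simp
      then have "v \<bullet> x i rs \<le> Mv" using init[OF i] taub_pos by auto
      then show False using ib e unfolding b_def \<open>rs = T0\<close> by simp
    qed
    have taurs: "tau rs \<in> {0..taub}" using tau_range rsT T0 by auto
    have dl: "v \<bullet> x j (rs - tau rs) \<le> v \<bullet> x i rs" if j: "j \<in> {1..N}" for j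
    proof (cases "rs - tau rs < T0")
      case True
      then have "v \<bullet> x j (rs - tau rs) \<le> Mv" using init[OF j] taurs rsT by auto
      moreover have "Mv < b rs" unfolding b_def using e rsT by simp
      ultimately show ?thesis using ib by linarith
    next
      case False
      show ?thesis
      proof (cases "tau rs = 0")
        case True then show ?thesis using imax[OF j] by simp
      next
        case f2: False
        then have "rs - tau rs < rs" using taurs by auto
        then have "v \<bullet> x j (rs - tau rs) < b (rs - tau rs)" using below[OF j] False by simp
        moreover have "b (rs - tau rs) \<le> b rs" unfolding b_def using e taurs by (simp add: mult_left_mono)
        ultimately show ?thesis using ib by linarith
      qed
    qed
    define Dv where "Dv = (1 / (real N - 1)) * (\<Sum>j\<in>{1..N}-{i}. psi (x i rs) (x j (rs - tau rs)) * (v \<bullet> x j (rs - tau rs) - v \<bullet> x i rs))"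
    have Dv0: "Dv \<le> 0" unfolding Dv_def
    proof (rule mult_nonneg_nonpos)
      show "0 \<le> 1 / (real N - 1)" using N2 by simp
      show "(\<Sum>j\<in>{1..N}-{i}. psi (x i rs) (x j (rs - tau rs)) * (v \<bullet> x j (rs - tau rs) - v \<bullet> x i rs)) \<le> 0"
      proof (rule sum_nonpos)
        fix j assume "j \<in> {1..N}-{i}"
        then show "psi (x i rs) (x j (rs - tau rs)) * (v \<bullet> x j (rs - tau rs) - v \<bullet> x i rs) \<le> 0"
          using dl[of j] psi_pos[of "x i rs" "x j (rs - tau rs)"] by (intro mult_nonneg_nonpos) auto
      qed
    qed
    have der1: "((\<lambda>r. v \<bullet> x i r - b r) has_real_derivative Dv - e) (at rs)"
      unfolding b_def Dv_def using T0 rsgt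
      by (auto intro!: derivative_eq_intros yder[OF i])
    have neg0: "Dv - e < 0" using Dv0 e by simp
    from DERIV_neg_dec_left[OF der1 neg0] obtain d where d: "d > 0" "\<And>h. h > 0 \<Longrightarrow> h < d \<Longrightarrow> v \<bullet> x i rs - b rs < v \<bullet> x i (rs - h) - b (rs - h)"
      by blast
    define h where "h = min (d/2) ((rs - T0)/2)"
    have h: "h > 0" "h < d" "T0 \<le> rs - h" "rs - h < rs" using d rsgt unfolding h_def by (auto simp: min_def field_simps)
    have "v \<bullet> x i (rs - h) < b (rs - h)" using below[OF i h(3) h(4)] .
    then show False using d(2)[OF h(1) h(2)] ib by linarith
  qed
  show ?thesis
  proof (cases "r \<le> T0")
    case True then show ?thesis using init[OF i] r by auto
  next
    case False
    show ?thesis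
    proof (rule ccontr)
      assume "\<not> ?thesis"
      then have gt: "v \<bullet> x i r > Mv" by simp
      define c where "c = 1 + (r - T0)"
      have c: "c > 0" using False unfolding c_def by simp
      define e where "e = (v \<bullet> x i r - Mv) / (2 * c)"
      have e: "e > 0" using gt c unfolding e_def by simp
      have "v \<bullet> x i r < Mv + e * c" using bar[OF e] i False unfolding c_def by auto
      moreover have "e * c = (v \<bullet> x i r - Mv) / 2" unfolding e_def using c by simp
      ultimately have "v \<bullet> x i r < Mv + (v \<bullet> x i r - Mv) / 2" by simp
      then show False using gt by (simp add: field_simps)
    qed
  qed
qed

lemma drift_upper:
  assumes T0: "T0 \<ge> 0" and init: "\<And>j q. j\<in>{1..N} \<Longrightarrow> q\<in>{T0-taub..T0} \<Longrightarrow> v \<bullet> x j q \<le> Mv"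
    and i: "i\<in>{1..N}" and r: "r \<ge> T0" "r > 0"
  shows "(1/(real N - 1)) * (\<Sum>j\<in>{1..N}-{i}. psi (x i r) (x j (r - tau r)) * (v \<bullet> x j (r - tau r) - v \<bullet> x i r))
     \<le> K * (Mv - v \<bullet> x i r)"
proof -
  have yi: "v \<bullet> x i r \<le> Mv" using upper_inv[OF T0 init i] r taub_pos by auto
  have tr: "tau r \<in> {0..taub}" using tau_range r by auto
  have "(\<Sum>j\<in>{1..N}-{i}. psi (x i r) (x j (r - tau r)) * (v \<bullet> x j (r - tau r) - v \<bullet> x i r))
      \<le> (\<Sum>j\<in>{1..N}-{i}. K * (Mv - v \<bullet> x i r))"
  proof (rule sum_mono)
    fix j assume j: "j \<in> {1..N}-{i}"
    have yj: "v \<bullet> x j (r - tau r) \<le> Mv" using upper_inv[OF T0 init, of j "r - tau r"] j tr r by auto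
    have p: "0 \<le> psi (x i r) (x j (r - tau r))" using psi_pos less_imp_le by blast
    have "psi (x i r) (x j (r - tau r)) * (v \<bullet> x j (r - tau r) - v \<bullet> x i r)
        \<le> psi (x i r) (x j (r - tau r)) * (Mv - v \<bullet> x i r)" using yj p by (intro mult_left_mono) auto
    also have "\<dots> \<le> K * (Mv - v \<bullet> x i r)" using yi psi_le by (intro mult_right_mono) auto
    finally show "psi (x i r) (x j (r - tau r)) * (v \<bullet> x j (r - tau r) - v \<bullet> x i r) \<le> K * (Mv - v \<bullet> x i r)" .
  qed
  also have "\<dots> = (real N - 1) * (K * (Mv - v \<bullet> x i r))" using card_S[OF i] N2 by (simp add: of_nat_diff)
  finally have "(\<Sum>j\<in>{1..N}-{i}. psi (x i r) (x j (r - tau r)) * (v \<bullet> x j (r - tau r) - v \<bullet> x i r))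
      \<le> (real N - 1) * (K * (Mv - v \<bullet> x i r))" .
  moreover have "real N - 1 > 0" using N2 by simp
  ultimately show ?thesis by (simp add: field_simps)
qed

lemma decay:
  assumes T0: "T0 \<ge> 0" and init: "\<And>j q. j\<in>{1..N} \<Longrightarrow> q\<in>{T0-taub..T0} \<Longrightarrow> v \<bullet> x j q \<le> Mv"
    and i: "i\<in>{1..N}" and ab: "T0 \<le> a" "a \<le> b"
  shows "Mv - v \<bullet> x i b \<ge> exp(-K*(b-a)) * (Mv - v \<bullet> x i a)"
proof -
  define dr where "dr r = (1/(real N - 1)) * (\<Sum>j\<in>{1..N}-{i}. psi (x i r) (x j (r - tau r)) * (v \<bullet> x j (r - tau r) - v \<bullet> x i r))" for r
  have "Mv - v \<bullet> x i b \<ge> exp(-K*(b-a)) * (Mv - v \<bullet> x i a) + 0/K * (1 - exp (-K*(b-a)))"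
  proof (rule gronwall[where f'="\<lambda>r. 0 - dr r", OF K_pos ab(2)])
    show "continuous_on {a..b} (\<lambda>r. Mv - v \<bullet> x i r)"
      by (intro continuous_intros ycont[OF i]) (use ab T0 taub_pos in auto)
  next
    fix r assume r: "a < r" "r < b"
    show "((\<lambda>r. Mv - v \<bullet> x i r) has_real_derivative 0 - dr r) (at r)"
      unfolding dr_def by (rule DERIV_diff[OF DERIV_const yder[OF i]]) (use r ab T0 in auto)
    show "0 - K * (Mv - v \<bullet> x i r) \<le> 0 - dr r"
      using drift_upper[OF T0 init i, of r] r ab T0 unfolding dr_def by auto
  qed
  then show ?thesis by simp
qed

lemma decay_low:
  assumes T0: "T0 \<ge> 0" and init: "\<And>j q. j\<in>{1..N} \<Longrightarrow> q\<in>{T0-taub..T0} \<Longrightarrow> m \<le> v \<bullet> x j q"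
    and i: "i\<in>{1..N}" and ab: "T0 \<le> a" "a \<le> b"
  shows "v \<bullet> x i b - m \<ge> exp(-K*(b-a)) * (v \<bullet> x i a - m)"
  using decay[OF T0, of "-v" "-m" i a b] init i ab by (simp add: inner_minus_left)

lemma lower_inv:
  assumes T0: "T0 \<ge> 0" and init: "\<And>j q. j\<in>{1..N} \<Longrightarrow> q\<in>{T0-taub..T0} \<Longrightarrow> m \<le> v \<bullet> x j q"
    and i: "i\<in>{1..N}" and r: "r \<ge> T0 - taub"
  shows "m \<le> v \<bullet> x i r"
  using upper_inv[OF T0, of "-v" "-m" i r] init i r by (simp add: inner_minus_left)

lemma sum_two:
  fixes f g :: "nat \<Rightarrow> real"
  assumes "i \<in> {1..N}" "l \<in> {1..N}" "i \<noteq> l"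
  shows "(\<Sum>j\<in>{1..N}-{i}. f j) + (\<Sum>j\<in>{1..N}-{l}. g j) = f l + g i + (\<Sum>j\<in>{1..N}-{i,l}. f j + g j)"
proof -
  have a: "{1..N}-{i} = insert l ({1..N}-{i,l})" using assms by auto
  have b: "{1..N}-{l} = insert i ({1..N}-{i,l})" using assms by auto
  show ?thesis unfolding a b by (simp add: sum.distrib)
qed

lemma card_U: "i \<in> {1..N} \<Longrightarrow> l \<in> {1..N} \<Longrightarrow> i \<noteq> l \<Longrightarrow> real (card ({1..N}-{i,l})) = real N - 2"
proof -
  assume h: "i \<in> {1..N}" "l \<in> {1..N}" "i \<noteq> l"
  have "card ({1..N}-{i,l}) = card {1..N} - card {i,l}" using h by (intro card_Diff_subset) auto
  also have "\<dots> = N - 2" using h by simp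
  finally show ?thesis using N2 by (simp add: of_nat_diff)
qed

lemma contract_same:
  assumes T0: "T0 \<ge> 0"
    and initU: "\<And>j q. j\<in>{1..N} \<Longrightarrow> q\<in>{T0-taub..T0} \<Longrightarrow> v \<bullet> x j q \<le> M"
    and initL: "\<And>j q. j\<in>{1..N} \<Longrightarrow> q\<in>{T0-taub..T0} \<Longrightarrow> m \<le> v \<bullet> x j q"
    and p0: "p0 > 0"
    and p0le: "\<And>i j t. i\<in>{1..N} \<Longrightarrow> j\<in>{1..N} \<Longrightarrow> t > 0 \<Longrightarrow> p0 \<le> psi (x i t) (x j (t - tau t))"
    and i: "i\<in>{1..N}" and l: "l\<in>{1..N}" and w: "w \<ge> T0 + 2*taub"
  shows "(M - v \<bullet> x i w) + (v \<bullet> x l w - m) \<ge> min (exp(-2*K*taub)) (p0/K*(1 - exp(-K*taub))) * (M - m)"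
proof -
  define mu where "mu = min (exp(-2*K*taub)) (p0/K*(1 - exp(-K*taub)))"
  have Mm: "m \<le> M" using initU[OF i, of T0] initL[OF i, of T0] taub_pos by auto
  have e2le: "exp(-2*K*taub) \<le> 1" using K_pos taub_pos by simp
  have up: "v \<bullet> x j r \<le> M" if "j \<in> {1..N}" "r \<ge> T0 - taub" for j r
    using upper_inv[OF T0 initU that] .
  have lo: "m \<le> v \<bullet> x j r" if "j \<in> {1..N}" "r \<ge> T0 - taub" for j r
    using lower_inv[OF T0 initL that] .
  show ?thesis
  proof (cases "i = l")
    case True
    have "mu \<le> 1" unfolding mu_def using e2le by (simp add: min_le_iff_disj)
    then have "mu * (M - m) \<le> 1 * (M - m)" using Mm by (intro mult_right_mono) auto
    then show ?thesis unfolding mu_def[symmetric] using True by simp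
  next
    case ne: False
    show ?thesis
    proof (cases "\<exists>r\<in>{w-taub..w}. v \<bullet> x l (r - tau r) > v \<bullet> x i (r - tau r)")
      case True
      then obtain r where r: "r \<in> {w-taub..w}" and gt: "v \<bullet> x l (r - tau r) > v \<bullet> x i (r - tau r)" by blast
      define q where "q = r - tau r"
      have tr: "tau r \<in> {0..taub}" using tau_range r w T0 taub_pos by auto
      have q: "T0 \<le> q" "q \<le> w" "w - q \<le> 2*taub" using r tr w unfolding q_def by auto
      have ex: "exp(-2*K*taub) \<le> exp(-K*(w-q))" using q K_pos by (simp add: mult_left_mono)
      have d1: "M - v \<bullet> x i w \<ge> exp(-K*(w-q)) * (M - v \<bullet> x i q)"
        by (rule decay[OF T0 initU i q(1) q(2)])
      have d2: "v \<bullet> x l w - m \<ge> exp(-K*(w-q)) * (v \<bullet> x l q - m)"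
        by (rule decay_low[OF T0 initL l q(1) q(2)])
      have "exp(-2*K*taub) * (M - v \<bullet> x i q) \<le> exp(-K*(w-q)) * (M - v \<bullet> x i q)"
        using ex up[OF i, of q] q T0 by (intro mult_right_mono) auto
      moreover have "exp(-2*K*taub) * (v \<bullet> x l q - m) \<le> exp(-K*(w-q)) * (v \<bullet> x l q - m)"
        using ex lo[OF l, of q] q T0 by (intro mult_right_mono) auto
      moreover have "exp(-2*K*taub) * (M - m) \<le> exp(-2*K*taub) * (M - v \<bullet> x i q) + exp(-2*K*taub) * (v \<bullet> x l q - m)"
        using gt unfolding q_def[symmetric] by (simp add: distrib_left[symmetric] mult_left_mono)
      moreover have "mu * (M - m) \<le> exp(-2*K*taub) * (M - m)" unfolding mu_def using Mm by (intro mult_right_mono) auto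
      ultimately show ?thesis using d1 d2 unfolding mu_def[symmetric] by linarith
    next
      case False
      then have caseB: "\<And>r. r \<in> {w-taub..w} \<Longrightarrow> v \<bullet> x l (r - tau r) \<le> v \<bullet> x i (r - tau r)" by (auto simp: not_less)
      define dr where "dr k r = (1/(real N - 1)) * (\<Sum>j\<in>{1..N}-{k}. psi (x k r) (x j (r - tau r)) * (v \<bullet> x j (r - tau r) - v \<bullet> x k r))" for k r
      define Phi where "Phi r = (M - v \<bullet> x i r) + (v \<bullet> x l r - m)" for r
      have "Phi w \<ge> exp(-K*(w-(w-taub))) * Phi (w-taub) + (p0*(M-m))/K * (1 - exp (-K*(w-(w-taub))))"
      proof (rule gronwall[where f'="\<lambda>r. (0 - dr i r) + (dr l r - 0)", OF K_pos])
        show "w - taub \<le> w" using taub_pos by simp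
        show "continuous_on {w-taub..w} Phi"
          unfolding Phi_def by (intro continuous_intros ycont[OF i] ycont[OF l]) (use w T0 taub_pos in auto)
      next
        fix r assume r: "w - taub < r" "r < w"
        have r0: "r > 0" "r \<ge> T0" using r w T0 taub_pos by auto
        show "(Phi has_real_derivative (0 - dr i r) + (dr l r - 0)) (at r)"
          unfolding Phi_def dr_def
          by (intro DERIV_add DERIV_diff DERIV_const yder[OF i r0(1)] yder[OF l r0(1)])
        define q where "q = r - tau r"
        have tr: "tau r \<in> {0..taub}" using tau_range r0 by auto
        have q: "q \<ge> T0 - taub" using tr r0 unfolding q_def by auto
        have yiq: "v \<bullet> x l q \<le> v \<bullet> x i q" using caseB[of r] r unfolding q_def by auto
        have s1: "- (\<Sum>j\<in>{1..N}-{i}. psi (x i r) (x j q) * (v \<bullet> x j q - v \<bullet> x i r))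
            \<ge> (\<Sum>j\<in>{1..N}-{i}. p0 * (M - v \<bullet> x j q) - K * (M - v \<bullet> x i r))"
          unfolding sum_negf[symmetric]
        proof (rule sum_mono)
          fix j assume j: "j \<in> {1..N}-{i}"
          have P: "p0 \<le> psi (x i r) (x j q)" using p0le[OF i, of j r] j r0 unfolding q_def by auto
          have a: "p0 * (M - v \<bullet> x j q) \<le> psi (x i r) (x j q) * (M - v \<bullet> x j q)"
            using P up[of j q] j q by (intro mult_right_mono) auto
          have b: "psi (x i r) (x j q) * (M - v \<bullet> x i r) \<le> K * (M - v \<bullet> x i r)"
            using psi_le up[OF i, of r] r0 taub_pos by (intro mult_right_mono) auto
          have c: "- (psi (x i r) (x j q) * (v \<bullet> x j q - v \<bullet> x i r)) =
              psi (x i r) (x j q) * (M - v \<bullet> x j q) - psi (x i r) (x j q) * (M - v \<bullet> x i r)"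
            by (simp add: algebra_simps)
          show "p0 * (M - v \<bullet> x j q) - K * (M - v \<bullet> x i r) \<le> - (psi (x i r) (x j q) * (v \<bullet> x j q - v \<bullet> x i r))"
            using a b c by linarith
        qed
        have s2: "(\<Sum>j\<in>{1..N}-{l}. psi (x l r) (x j q) * (v \<bullet> x j q - v \<bullet> x l r))
            \<ge> (\<Sum>j\<in>{1..N}-{l}. p0 * (v \<bullet> x j q - m) - K * (v \<bullet> x l r - m))"
        proof (rule sum_mono)
          fix j assume j: "j \<in> {1..N}-{l}"
          have P: "p0 \<le> psi (x l r) (x j q)" using p0le[OF l, of j r] j r0 unfolding q_def by auto
          have a: "p0 * (v \<bullet> x j q - m) \<le> psi (x l r) (x j q) * (v \<bullet> x j q - m)"
            using P lo[of j q] j q by (intro mult_right_mono) auto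
          have b: "psi (x l r) (x j q) * (v \<bullet> x l r - m) \<le> K * (v \<bullet> x l r - m)"
            using psi_le lo[OF l, of r] r0 taub_pos by (intro mult_right_mono) auto
          have c: "psi (x l r) (x j q) * (v \<bullet> x j q - v \<bullet> x l r) =
              psi (x l r) (x j q) * (v \<bullet> x j q - m) - psi (x l r) (x j q) * (v \<bullet> x l r - m)"
            by (simp add: algebra_simps)
          show "p0 * (v \<bullet> x j q - m) - K * (v \<bullet> x l r - m) \<le> psi (x l r) (x j q) * (v \<bullet> x j q - v \<bullet> x l r)"
            using a b c by linarith
        qed
        have rN: "real (N - 1) = real N - 1" using N2 by (simp add: of_nat_diff)
        have ca: "(\<Sum>j\<in>{1..N}-{i}. p0 * (M - v \<bullet> x j q) - K * (M - v \<bullet> x i r))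
            = p0 * (\<Sum>j\<in>{1..N}-{i}. (M - v \<bullet> x j q)) - (real N - 1) * (K * (M - v \<bullet> x i r))"
          by (simp only: sum_subtractf sum_distrib_left[symmetric] sum_constant card_S[OF i] rN) (simp add: algebra_simps)
        have cb: "(\<Sum>j\<in>{1..N}-{l}. p0 * (v \<bullet> x j q - m) - K * (v \<bullet> x l r - m))
            = p0 * (\<Sum>j\<in>{1..N}-{l}. (v \<bullet> x j q - m)) - (real N - 1) * (K * (v \<bullet> x l r - m))"
          by (simp only: sum_subtractf sum_distrib_left[symmetric] sum_constant card_S[OF l] rN) (simp add: algebra_simps)
        have cs: "(\<Sum>j\<in>{1..N}-{i}. p0 * (M - v \<bullet> x j q) - K * (M - v \<bullet> x i r))
             + (\<Sum>j\<in>{1..N}-{l}. p0 * (v \<bullet> x j q - m) - K * (v \<bullet> x l r - m))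
           = p0 * ((\<Sum>j\<in>{1..N}-{i}. (M - v \<bullet> x j q)) + (\<Sum>j\<in>{1..N}-{l}. (v \<bullet> x j q - m)))
             - (real N - 1) * K * Phi r"
          unfolding ca cb Phi_def by (simp add: algebra_simps)
        have st: "(\<Sum>j\<in>{1..N}-{i}. (M - v \<bullet> x j q)) + (\<Sum>j\<in>{1..N}-{l}. (v \<bullet> x j q - m))
            = (M - v \<bullet> x l q) + (v \<bullet> x i q - m) + (\<Sum>j\<in>{1..N}-{i,l}. (M - v \<bullet> x j q) + (v \<bullet> x j q - m))"
          by (rule sum_two[OF i l ne])
        have "(\<Sum>j\<in>{1..N}-{i,l}. (M - v \<bullet> x j q) + (v \<bullet> x j q - m)) = (real N - 2) * (M - m)"
          using card_U[OF i l ne] by simp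
        then have X: "(\<Sum>j\<in>{1..N}-{i}. (M - v \<bullet> x j q)) + (\<Sum>j\<in>{1..N}-{l}. (v \<bullet> x j q - m))
            \<ge> (real N - 1) * (M - m)"
          using st yiq by (simp add: algebra_simps)
        have Nm: "real N - 1 > 0" using N2 by simp
        have "(0 - dr i r) + (dr l r - 0) = (1/(real N - 1)) *
           (- (\<Sum>j\<in>{1..N}-{i}. psi (x i r) (x j q) * (v \<bullet> x j q - v \<bullet> x i r))
            + (\<Sum>j\<in>{1..N}-{l}. psi (x l r) (x j q) * (v \<bullet> x j q - v \<bullet> x l r)))"
          unfolding dr_def q_def by (simp add: algebra_simps)
        also have "\<dots> \<ge> (1/(real N - 1)) * (p0 * ((real N - 1) * (M - m)) - (real N - 1) * K * Phi r)"
        proof (rule mult_left_mono)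
          have pX: "p0 * ((real N - 1) * (M - m)) \<le> p0 * ((\<Sum>j\<in>{1..N}-{i}. (M - v \<bullet> x j q)) + (\<Sum>j\<in>{1..N}-{l}. (v \<bullet> x j q - m)))"
            by (rule mult_left_mono[OF X]) (use p0 in simp)
          show "p0 * ((real N - 1) * (M - m)) - (real N - 1) * K * Phi r \<le>
           (- (\<Sum>j\<in>{1..N}-{i}. psi (x i r) (x j q) * (v \<bullet> x j q - v \<bullet> x i r))
            + (\<Sum>j\<in>{1..N}-{l}. psi (x l r) (x j q) * (v \<bullet> x j q - v \<bullet> x l r)))"
            using s1 s2 cs pX by linarith
          show "0 \<le> 1 / (real N - 1)" using Nm by simp
        qed
        also have "(1/(real N - 1)) * (p0 * ((real N - 1) * (M - m)) - (real N - 1) * K * Phi r) = p0*(M-m) - K*Phi r"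
          using Nm by (simp add: field_simps)
        finally show "p0 * (M - m) - K * Phi r \<le> (0 - dr i r) + (dr l r - 0)" .
      qed
      moreover have "Phi (w - taub) \<ge> 0" unfolding Phi_def using up[OF i, of "w-taub"] lo[OF l, of "w-taub"] w T0 taub_pos by auto
      then have "0 \<le> exp(-K*(w-(w-taub))) * Phi (w-taub)" by simp
      ultimately have "Phi w \<ge> (p0*(M-m))/K * (1 - exp (-K*(w-(w-taub))))" by linarith
      then have "Phi w \<ge> (p0*(M-m))/K * (1 - exp (-K*taub))" by simp
      moreover have "(p0*(M-m))/K * (1 - exp (-K*taub)) = p0/K*(1 - exp(-K*taub)) * (M - m)" by simp
      moreover have "mu * (M - m) \<le> p0/K*(1 - exp(-K*taub)) * (M - m)" unfolding mu_def using Mm by (intro mult_right_mono) auto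
      ultimately show ?thesis unfolding mu_def[symmetric] Phi_def by linarith
    qed
  qed
qed

lemma contract_cross:
  assumes T0: "T0 \<ge> 0"
    and initU: "\<And>j q. j\<in>{1..N} \<Longrightarrow> q\<in>{T0-taub..T0} \<Longrightarrow> v \<bullet> x j q \<le> M"
    and initL: "\<And>j q. j\<in>{1..N} \<Longrightarrow> q\<in>{T0-taub..T0} \<Longrightarrow> m \<le> v \<bullet> x j q"
    and p0: "p0 > 0"
    and p0le: "\<And>i j t. i\<in>{1..N} \<Longrightarrow> j\<in>{1..N} \<Longrightarrow> t > 0 \<Longrightarrow> p0 \<le> psi (x i t) (x j (t - tau t))"
    and i: "i\<in>{1..N}" and l: "l\<in>{1..N}"
    and s: "s \<in> {T0 + 2*taub .. T0 + 3*taub}" and t: "t \<in> {T0 + 2*taub .. T0 + 3*taub}"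
  shows "v \<bullet> x i s - v \<bullet> x l t \<le> (1 - exp(-K*taub) * min (exp(-2*K*taub)) (p0/K*(1 - exp(-K*taub)))) * (M - m)"
proof -
  define mu where "mu = min (exp(-2*K*taub)) (p0/K*(1 - exp(-K*taub)))"
  define w where "w = min s t"
  have w: "w \<ge> T0 + 2*taub" "T0 \<le> w" "w \<le> s" "w \<le> t" "s - w \<le> taub" "t - w \<le> taub"
    using s t taub_pos unfolding w_def by auto
  have up: "v \<bullet> x j r \<le> M" if "j \<in> {1..N}" "r \<ge> T0 - taub" for j r
    using upper_inv[OF T0 initU that] .
  have lo: "m \<le> v \<bullet> x j r" if "j \<in> {1..N}" "r \<ge> T0 - taub" for j r
    using lower_inv[OF T0 initL that] .
  have cs: "(M - v \<bullet> x i w) + (v \<bullet> x l w - m) \<ge> mu * (M - m)"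
    unfolding mu_def by (rule contract_same[OF T0 initU initL p0 p0le i l w(1)])
  have e1: "exp(-K*taub) \<le> exp(-K*(s-w))" using w K_pos by (simp add: mult_left_mono)
  have e2: "exp(-K*taub) \<le> exp(-K*(t-w))" using w K_pos by (simp add: mult_left_mono)
  have d1: "M - v \<bullet> x i s \<ge> exp(-K*(s-w)) * (M - v \<bullet> x i w)"
    by (rule decay[OF T0 initU i w(2) w(3)])
  have d2: "v \<bullet> x l t - m \<ge> exp(-K*(t-w)) * (v \<bullet> x l w - m)"
    by (rule decay_low[OF T0 initL l w(2) w(4)])
  have f1: "exp(-K*taub) * (M - v \<bullet> x i w) \<le> exp(-K*(s-w)) * (M - v \<bullet> x i w)"
    using e1 up[OF i, of w] w taub_pos by (intro mult_right_mono) auto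
  have f2: "exp(-K*taub) * (v \<bullet> x l w - m) \<le> exp(-K*(t-w)) * (v \<bullet> x l w - m)"
    using e2 lo[OF l, of w] w taub_pos by (intro mult_right_mono) auto
  have f3: "exp(-K*taub) * (mu * (M - m)) \<le> exp(-K*taub) * ((M - v \<bullet> x i w) + (v \<bullet> x l w - m))"
    using cs by (intro mult_left_mono) auto
  have "(1 - exp(-K*taub) * mu) * (M - m) = (M - m) - exp(-K*taub) * (mu * (M - m))" by (simp add: algebra_simps)
  moreover have "exp(-K*taub) * ((M - v \<bullet> x i w) + (v \<bullet> x l w - m)) = exp(-K*taub) * (M - v \<bullet> x i w) + exp(-K*taub) * (v \<bullet> x l w - m)"
    by (simp add: algebra_simps)
  ultimately show ?thesis unfolding mu_def[symmetric] using d1 d2 f1 f2 f3 by linarith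
qed

lemma normbound:
  assumes i: "i\<in>{1..N}" and r: "r \<ge> -taub"
    and Bnd: "\<And>j q. j\<in>{1..N} \<Longrightarrow> q \<in> {-taub..0} \<Longrightarrow> norm (x j q) \<le> B"
  shows "norm (x i r) \<le> B"
proof (cases "x i r = 0")
  case True
  have "norm (x 1 0) \<le> B" using Bnd[of 1 0] N2 taub_pos by auto
  then show ?thesis using True by (metis norm_ge_zero norm_zero order_trans)
next
  case False
  define v where "v = sgn (x i r)"
  have nv: "norm v = 1" using False unfolding v_def by (simp add: norm_sgn)
  have init: "v \<bullet> x j q \<le> B" if "j\<in>{1..N}" "q\<in>{0-taub..0}" for j q
  proof -
    have "v \<bullet> x j q \<le> norm v * norm (x j q)" by (rule norm_cauchy_schwarz)
    also have "\<dots> \<le> B" using nv Bnd[of j q] that by simp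
    finally show ?thesis .
  qed
  have "v \<bullet> x i r \<le> B" by (rule upper_inv[of 0 v B i r]) (use init i r in auto)
  moreover have "v \<bullet> x i r = norm (x i r)" unfolding v_def using False
    by (simp add: sgn_div_norm inner_commute power2_norm_eq_inner[symmetric] power2_eq_square)
  ultimately show ?thesis by simp
qed

lemma diam_upper:
  assumes Bd: "\<And>j r. j\<in>{1..N} \<Longrightarrow> r \<ge> -taub \<Longrightarrow> norm (x j r) \<le> B"
    and i: "i\<in>{1..N}" and j: "j\<in>{1..N}"
    and s: "s \<in> {real n*taub - taub .. real n*taub}" and t: "t \<in> {real n*taub - taub .. real n*taub}"
  shows "norm (x i s - x j t) \<le> diamD N taub x n"
  unfolding diamD_def
proof (rule cSUP_upper2[where x="(i,j,s,t)"])
  show "(i, j, s, t) \<in> {(i,j,s,t). i \<in> {1..N} \<and> j \<in> {1..N} \<and>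
                 s \<in> {real n * taub - taub .. real n * taub} \<and>
                 t \<in> {real n * taub - taub .. real n * taub}}" using i j s t by auto
  show "norm (x i s - x j t) \<le> (case (i, j, s, t) of (i, j, s, t) \<Rightarrow> norm (x i s - x j t))" by simp
  show "bdd_above ((\<lambda>p. case p of (i, j, s, t) \<Rightarrow> norm (x i s - x j t)) ` {(i,j,s,t). i \<in> {1..N} \<and> j \<in> {1..N} \<and>
                 s \<in> {real n * taub - taub .. real n * taub} \<and>
                 t \<in> {real n * taub - taub .. real n * taub}})"
  proof (rule bdd_aboveI2[where M="2*B"])
    fix p assume "p \<in> {(i,j,s,t). i \<in> {1..N} \<and> j \<in> {1..N} \<and>
                 s \<in> {real n * taub - taub .. real n * taub} \<and>
                 t \<in> {real n * taub - taub .. real n * taub}}"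
    then obtain i j s t where p: "p = (i,j,s,t)" "i \<in> {1..N}" "j \<in> {1..N}"
      "s \<in> {real n * taub - taub .. real n * taub}" "t \<in> {real n * taub - taub .. real n * taub}" by auto
    have h0: "0 \<le> real n * taub" using taub_pos by simp
    have "real n * taub - taub \<le> s" "real n * taub - taub \<le> t" using p(4,5) by auto
    then have st: "s \<ge> -taub" "t \<ge> -taub" using h0 by linarith+
    have "norm (x i s - x j t) \<le> norm (x i s) + norm (x j t)" by (rule norm_triangle_ineq4)
    also have "\<dots> \<le> 2 * B" using Bd[OF p(2) st(1)] Bd[OF p(3) st(2)] by simp
    finally show "(case p of (i, j, s, t) \<Rightarrow> norm (x i s - x j t)) \<le> 2 * B" using p by simp
  qed
qed

lemma diam_least:
  assumes "\<And>i j s t. i\<in>{1..N} \<Longrightarrow> j\<in>{1..N} \<Longrightarrow> s \<in> {real n*taub - taub .. real n*taub} \<Longrightarrow>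
      t \<in> {real n*taub - taub .. real n*taub} \<Longrightarrow> norm (x i s - x j t) \<le> c"
  shows "diamD N taub x n \<le> c"
  unfolding diamD_def
proof (rule cSUP_least)
  show "{(i,j,s,t). i \<in> {1..N} \<and> j \<in> {1..N} \<and>
                 s \<in> {real n * taub - taub .. real n * taub} \<and>
                 t \<in> {real n * taub - taub .. real n * taub}} \<noteq> {}"
    using N2 taub_pos by (auto intro!: exI[of _ 1] exI[of _ "real n * taub"])
  fix p assume "p \<in> {(i,j,s,t). i \<in> {1..N} \<and> j \<in> {1..N} \<and>
                 s \<in> {real n * taub - taub .. real n * taub} \<and>
                 t \<in> {real n * taub - taub .. real n * taub}}"
  then show "(case p of (i, j, s, t) \<Rightarrow> norm (x i s - x j t)) \<le> c" using assms by auto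
qed

lemma diam_nonneg:
  assumes Bd: "\<And>j r. j\<in>{1..N} \<Longrightarrow> r \<ge> -taub \<Longrightarrow> norm (x j r) \<le> B"
  shows "0 \<le> diamD N taub x n"
proof -
  have "norm (x 1 (real n * taub) - x 1 (real n * taub)) \<le> diamD N taub x n"
    by (rule diam_upper[OF Bd]) (use N2 taub_pos in auto)
  then show ?thesis by simp
qed

lemma step:
  assumes p0: "p0 > 0"
    and p0le: "\<And>i j t. i\<in>{1..N} \<Longrightarrow> j\<in>{1..N} \<Longrightarrow> t > 0 \<Longrightarrow> p0 \<le> psi (x i t) (x j (t - tau t))"
    and Bd: "\<And>j r. j\<in>{1..N} \<Longrightarrow> r \<ge> -taub \<Longrightarrow> norm (x j r) \<le> B"
    and n: "n \<ge> 2"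
  shows "diamD N taub x (n+1) \<le> (1 - exp(-K*taub) * min (exp(-2*K*taub)) (p0/K*(1 - exp(-K*taub)))) * diamD N taub x (n-2)"
proof -
  define mu where "mu = min (exp(-2*K*taub)) (p0/K*(1 - exp(-K*taub)))"
  define Ct where "Ct = 1 - exp(-K*taub) * mu"
  define D where "D = diamD N taub x (n-2)"
  have D0: "D \<ge> 0" unfolding D_def by (rule diam_nonneg[OF Bd])
  have e1: "exp(-K*taub) \<le> 1" using K_pos taub_pos by simp
  have pe: "p0/K*(1 - exp(-K*taub)) \<ge> 0" using p0 K_pos e1 by (intro mult_nonneg_nonneg) auto
  have mu0: "mu \<ge> 0" unfolding mu_def using pe by simp
  have e2le: "exp(-2*K*taub) \<le> 1" using K_pos taub_pos by simp
  have mu1: "mu \<le> 1" unfolding mu_def by (rule order_trans[OF min.cobounded1 e2le])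
  have Ct0: "Ct \<ge> 0" unfolding Ct_def using mult_le_one[OF e1 mu0 mu1] by simp
  define T0 where "T0 = real (n-2) * taub"
  have T0: "T0 \<ge> 0" unfolding T0_def using taub_pos by simp
  have w1: "{real (n+1)*taub - taub .. real (n+1)*taub} = {T0 + 2*taub .. T0 + 3*taub}"
  proof -
    have r3: "real (n+1) = real (n-2) + 3" using n by (simp add: of_nat_diff)
    have a: "real (n+1) * taub = T0 + 3*taub" unfolding T0_def r3 by (simp add: distrib_right)
    have c: "T0 + 3*taub - taub = T0 + 2*taub" by simp
    show ?thesis by (simp only: a c)
  qed
  have w0: "{real (n-2)*taub - taub .. real (n-2)*taub} = {T0 - taub .. T0}" unfolding T0_def by simp
  have "diamD N taub x (n+1) \<le> Ct * D"
  proof (rule diam_least)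
    fix i j s t assume i: "i\<in>{1..N}" and j: "j\<in>{1..N}"
      and s: "s \<in> {real (n+1)*taub - taub .. real (n+1)*taub}" and t: "t \<in> {real (n+1)*taub - taub .. real (n+1)*taub}"
    show "norm (x i s - x j t) \<le> Ct * D"
    proof (cases "x i s = x j t")
      case True then show ?thesis using Ct0 D0 by simp
    next
      case False
      define v where "v = sgn (x i s - x j t)"
      have nv: "norm v = 1" using False unfolding v_def by (simp add: norm_sgn)
      define W where "W = {1..N} \<times> {T0 - taub .. T0}"
      define g where "g p = v \<bullet> x (fst p) (snd p)" for p
      have Wne: "W \<noteq> {}" unfolding W_def using N2 taub_pos by auto
      have gb: "\<bar>g p\<bar> \<le> B" if "p \<in> W" for p
      proof -
        have "\<bar>g p\<bar> \<le> norm v * norm (x (fst p) (snd p))" unfolding g_def by (rule Cauchy_Schwarz_ineq2)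
        also have "\<dots> \<le> B" using nv Bd[of "fst p" "snd p"] that T0 unfolding W_def by auto
        finally show ?thesis .
      qed
      have bdA: "bdd_above (g ` W)"
      proof (rule bdd_aboveI2[where M=B])
        fix p assume "p \<in> W" then show "g p \<le> B" using gb[of p] by (simp add: abs_le_iff)
      qed
      have bdB: "bdd_below (g ` W)"
      proof (rule bdd_belowI2[where m="-B"])
        fix p assume "p \<in> W" then show "-B \<le> g p" using gb[of p] by (simp add: abs_le_iff)
      qed
      define M where "M = (SUP p\<in>W. g p)"
      define m where "m = (INF p\<in>W. g p)"
      have initU: "v \<bullet> x jj q \<le> M" if "jj\<in>{1..N}" "q\<in>{T0-taub..T0}" for jj q
      proof -
        have "g (jj,q) \<le> M" unfolding M_def by (rule cSUP_upper[OF _ bdA]) (use that in \<open>simp add: W_def\<close>)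
        then show ?thesis unfolding g_def by simp
      qed
      have initL: "m \<le> v \<bullet> x jj q" if "jj\<in>{1..N}" "q\<in>{T0-taub..T0}" for jj q
      proof -
        have "m \<le> g (jj,q)" unfolding m_def by (rule cINF_lower[OF bdB]) (use that in \<open>simp add: W_def\<close>)
        then show ?thesis unfolding g_def by simp
      qed
      have pair: "g a - g b \<le> D" if "a \<in> W" "b \<in> W" for a b
      proof -
        have "g a - g b = v \<bullet> (x (fst a) (snd a) - x (fst b) (snd b))" unfolding g_def by (simp add: inner_diff_right)
        also have "\<dots> \<le> norm v * norm (x (fst a) (snd a) - x (fst b) (snd b))" by (rule norm_cauchy_schwarz)
        also have "\<dots> \<le> D"
        proof -
          obtain ja qa jb qb where ab: "a = (ja,qa)" "b = (jb,qb)" by fastforce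
          have h: "ja \<in> {1..N}" "jb \<in> {1..N}" "qa \<in> {real (n-2)*taub - taub .. real (n-2)*taub}"
             "qb \<in> {real (n-2)*taub - taub .. real (n-2)*taub}" using that unfolding W_def w0 ab by auto
          show ?thesis unfolding nv D_def ab using diam_upper[OF Bd h] by simp
        qed
        finally show ?thesis .
      qed
      have MmD: "M - m \<le> D"
      proof -
        have "M - D \<le> g b" if b: "b \<in> W" for b
        proof -
          have "M \<le> D + g b" unfolding M_def
          proof (rule cSUP_least[OF Wne])
            fix a assume "a \<in> W" then show "g a \<le> D + g b" using pair[of a b] b by simp
          qed
          then show ?thesis by simp
        qed
        then have "M - D \<le> m" unfolding m_def by (intro cINF_greatest[OF Wne]) auto
        then show ?thesis by simp
      qed
      have cc: "v \<bullet> x i s - v \<bullet> x j t \<le> Ct * (M - m)"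
        unfolding Ct_def mu_def
        by (rule contract_cross[OF T0 initU initL p0 p0le i j]) (use s t w1 in simp_all)
      have "norm (x i s - x j t) = v \<bullet> (x i s - x j t)" unfolding v_def using False
        by (simp add: sgn_div_norm inner_commute power2_norm_eq_inner[symmetric] power2_eq_square)
      also have "\<dots> = v \<bullet> x i s - v \<bullet> x j t" by (simp add: inner_diff_right)
      also have "\<dots> \<le> Ct * (M - m)" by (rule cc)
      also have "\<dots> \<le> Ct * D" using MmD Ct0 by (rule mult_left_mono)
      finally show ?thesis .
    qed
  qed
  then show ?thesis unfolding Ct_def mu_def D_def .
qed

end

theorem mainTheorem7:
  fixes N :: nat and taub :: real and tau :: "real \<Rightarrow> real"
    and psi :: "'a::euclidean_space \<Rightarrow> 'a \<Rightarrow> real"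
    and x :: "nat \<Rightarrow> real \<Rightarrow> 'a"
  assumes N2: "N \<ge> 2"
    and taub_pos: "taub > 0"
    and tau_cont: "continuous_on {0..} tau"
    and tau_range: "\<And>t. t \<ge> 0 \<Longrightarrow> tau t \<in> {0..taub}"
    and psi_cont: "continuous_on UNIV (\<lambda>p. psi (fst p) (snd p))"
    and psi_bdd: "bounded (range (\<lambda>p. psi (fst p) (snd p)))"
    and psi_pos: "\<And>y z. psi y z > 0"
    and sol: "is_dHK_solution N taub tau psi x"
  defines "K \<equiv> Kconst psi"
    and "C \<equiv> Cconst (Kconst psi) taub (psi0 psi (M0 N taub x))"
    and "Ct \<equiv> 1 - exp (- Kconst psi * taub) * (1 - Cconst (Kconst psi) taub (psi0 psi (M0 N taub x)))"
  shows "(\<forall>n::nat. n \<ge> 2 \<longrightarrow> diamD N taub x (n + 1) \<le> Ct * diamD N taub x (n - 2)) \<and>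
         (\<forall>n::nat. diamD N taub x (3 * n) \<le> Ct ^ n * diamD N taub x 0)"
proof -
  define KK where "KK = Kconst psi"
  obtain Bp where Bp: "\<And>p. \<bar>psi (fst p) (snd p)\<bar> \<le> Bp"
    using psi_bdd unfolding bounded_iff by auto
  have bddK: "bdd_above (range (\<lambda>p. \<bar>psi (fst p) (snd p)\<bar>))"
    by (rule bdd_aboveI2[where M=Bp]) (rule Bp)
  have psi_le: "psi y z \<le> KK" for y z
  proof -
    have "\<bar>psi (fst (y,z)) (snd (y,z))\<bar> \<le> KK" unfolding KK_def Kconst_def
      by (rule cSUP_upper[OF _ bddK]) simp
    then show ?thesis by simp
  qed
  have cont: "\<And>i. i\<in>{1..N} \<Longrightarrow> continuous_on {-taub..} (x i)"
    and der: "\<And>i t. i\<in>{1..N} \<Longrightarrow> t > 0 \<Longrightarrow>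
        (x i has_vector_derivative
           ((1 / (real N - 1)) *\<^sub>R
              (\<Sum>j\<in>{1..N}-{i}. psi (x i t) (x j (t - tau t)) *\<^sub>R (x j (t - tau t) - x i t))))
        (at t)"
    using sol unfolding is_dHK_solution_def by auto
  interpret D: dhk N taub tau psi x KK
    by (rule dhk.intro) (rule N2, rule taub_pos, erule tau_range, rule psi_pos, rule psi_le, erule cont, erule der, assumption)
  define B where "B = M0 N taub x"
  have bddM: "bdd_above ((\<lambda>p. norm (x (fst p) (snd p))) ` ({1..N} \<times> {-taub..0}))"
  proof -
    have eq: "(\<lambda>p. norm (x (fst p) (snd p))) ` ({1..N} \<times> {-taub..0}) = (\<Union>i\<in>{1..N}. (\<lambda>s. norm (x i s)) ` {-taub..0})"
    proof (rule set_eqI, rule iffI)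
      fix y assume "y \<in> (\<lambda>p. norm (x (fst p) (snd p))) ` ({1..N} \<times> {-taub..0})"
      then obtain i s where "i \<in> {1..N}" "s \<in> {-taub..0}" "y = norm (x i s)" by auto
      then show "y \<in> (\<Union>i\<in>{1..N}. (\<lambda>s. norm (x i s)) ` {-taub..0})" by blast
    next
      fix y assume "y \<in> (\<Union>i\<in>{1..N}. (\<lambda>s. norm (x i s)) ` {-taub..0})"
      then obtain i s where "i \<in> {1..N}" "s \<in> {-taub..0}" "y = norm (x i s)" by auto
      then show "y \<in> (\<lambda>p. norm (x (fst p) (snd p))) ` ({1..N} \<times> {-taub..0})"
        by (intro image_eqI[of _ _ "(i,s)"]) auto
    qed
    have "bdd_above ((\<lambda>s. norm (x i s)) ` {-taub..0})" if i: "i \<in> {1..N}" for i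
    proof (rule bounded_imp_bdd_above, rule compact_imp_bounded, rule compact_continuous_image)
      show "continuous_on {-taub..0} (\<lambda>s. norm (x i s))"
        by (intro continuous_intros continuous_on_subset[OF cont[OF i]]) auto
    qed simp
    then show ?thesis unfolding eq by simp
  qed
  have Bnd0: "norm (x j q) \<le> B" if "j\<in>{1..N}" "q \<in> {-taub..0}" for j q
  proof -
    have "norm (x (fst (j,q)) (snd (j,q))) \<le> B" unfolding B_def M0_def
      by (rule cSUP_upper[OF _ bddM]) (use that in simp)
    then show ?thesis by simp
  qed
  have Bd: "norm (x j r) \<le> B" if "j\<in>{1..N}" "r \<ge> -taub" for j r
    by (rule D.normbound[OF that]) (rule Bnd0)
  have "norm (x 1 0) \<le> B" by (rule Bnd0) (use N2 taub_pos in auto)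
  then have B0: "B \<ge> 0" by (meson norm_ge_zero order_trans)
  define p0 where "p0 = psi0 psi B"
  define Q where "Q = cball (0::'a) B \<times> cball (0::'a) B"
  have bddQ: "bdd_below ((\<lambda>p. psi (fst p) (snd p)) ` Q)"
  proof (rule bdd_belowI2[where m=0])
    fix p show "0 \<le> psi (fst p) (snd p)" using psi_pos[of "fst p" "snd p"] by simp
  qed
  have p0le: "p0 \<le> psi (x i t) (x j (t - tau t))" if "i\<in>{1..N}" "j\<in>{1..N}" "t > 0" for i j t
  proof -
    have tr: "tau t \<in> {0..taub}" using tau_range that by auto
    have tt: "t \<ge> -taub" "t - tau t \<ge> -taub" using that tr taub_pos by auto
    have "(x i t, x j (t - tau t)) \<in> Q" unfolding Q_def using Bd[OF that(1) tt(1)] Bd[OF that(2) tt(2)] by simp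
    then have "p0 \<le> psi (fst (x i t, x j (t - tau t))) (snd (x i t, x j (t - tau t)))"
      unfolding p0_def psi0_def Q_def[symmetric] by (rule cINF_lower[OF bddQ])
    then show ?thesis by simp
  qed
  have p0pos: "p0 > 0"
  proof -
    have "compact Q" unfolding Q_def by (intro compact_Times compact_cball)
    moreover have "Q \<noteq> {}" unfolding Q_def using B0 by auto
    moreover have "continuous_on Q (\<lambda>p. psi (fst p) (snd p))" by (rule continuous_on_subset[OF psi_cont]) auto
    ultimately have "\<exists>p\<in>Q. \<forall>y\<in>Q. psi (fst p) (snd p) \<le> psi (fst y) (snd y)"
      by (rule continuous_attains_inf)
    then obtain p where p: "p \<in> Q" "\<And>y. y \<in> Q \<Longrightarrow> psi (fst p) (snd p) \<le> psi (fst y) (snd y)"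
      by blast
    have "psi (fst p) (snd p) \<le> p0" unfolding p0_def psi0_def Q_def[symmetric]
      by (rule cINF_greatest) (use \<open>Q \<noteq> {}\<close> p in auto)
    then show ?thesis using psi_pos[of "fst p" "snd p"] by linarith
  qed
  have CtEq: "Ct = 1 - exp(-KK*taub) * min (exp(-2*KK*taub)) (p0/KK*(1 - exp(-KK*taub)))"
  proof -
    have gen: "\<And>a b::real. 1 - max (1 - a) (1 - b) = min a b" by (simp add: max_def min_def)
    show ?thesis unfolding Ct_def KK_def[symmetric] p0_def B_def[symmetric] Cconst_def by (simp only: gen)
  qed
  have st: "\<forall>n::nat. n \<ge> 2 \<longrightarrow> diamD N taub x (n + 1) \<le> Ct * diamD N taub x (n - 2)"
    unfolding CtEq using D.step[OF p0pos p0le Bd] by blast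
  have Ct0: "Ct \<ge> 0"
  proof -
    have e1: "exp(-KK*taub) \<le> 1" using D.K_pos taub_pos by simp
    have e2le: "exp(-2*KK*taub) \<le> 1" using D.K_pos taub_pos by simp
    have pe: "p0/KK*(1 - exp(-KK*taub)) \<ge> 0" using p0pos D.K_pos e1 by (intro mult_nonneg_nonneg) auto
    have mu0: "min (exp(-2*KK*taub)) (p0/KK*(1 - exp(-KK*taub))) \<ge> 0" using pe by simp
    have mu1: "min (exp(-2*KK*taub)) (p0/KK*(1 - exp(-KK*taub))) \<le> 1" by (rule order_trans[OF min.cobounded1 e2le])
    show ?thesis unfolding CtEq using mult_le_one[OF e1 mu0 mu1] by simp
  qed
  have "diamD N taub x (3 * n) \<le> Ct ^ n * diamD N taub x 0" for n
  proof (induction n)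
    case 0 then show ?case by simp
  next
    case (Suc n)
    have e3: "3 * Suc n = (3*n+2) + 1" by simp
    have s1: "diamD N taub x ((3*n+2) + 1) \<le> Ct * diamD N taub x ((3*n+2) - 2)"
      by (rule st[rule_format]) simp
    have e4: "(3*n+2) - 2 = 3*n" by simp
    have "diamD N taub x (3 * Suc n) \<le> Ct * diamD N taub x (3*n)" using s1 unfolding e3 e4 .
    also have "\<dots> \<le> Ct * (Ct ^ n * diamD N taub x 0)" using Suc Ct0 by (rule mult_left_mono)
    finally show ?case by simp
  qed
  with st show ?thesis by (intro conjI) auto
qed

end
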